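(* Let $s\ge1$ and $N\ge1$ be integers, $f_s(z)=z^s$, knots $z_k=-1+\frac{2k}{N}$ ($k=0,\dots,N$), and let $g$ be the continuous piecewise-linear function on $[-1,1]$ interpolating $f_s$ at these knots. Then \[ \sup_{z\in[-1,1]}|f_s(z)-g(z)|\ \le\ \frac{s(s-1)}{2N^2}. \] Moreover, there exist $M\le N+1$ and reals $a_i,b_i,c_i$ ($i=1,\dots,M$) with $|a_i|\le1$, $|b_i|\le1$ and $|c_i|\le\max\{s+\frac12,\ \frac{2s(s-1)}{N}\}$ such that $g(z)=\sum_{i=1}^M c_i\,\mathrm{ReLU}(a_iz-b_i)$ for all $z\in[-1,1]$. In particular, for $\varepsilon>0$, choosing $N\ge\max\{1,\lceil\sqrt{s(s-1)/(2\varepsilon)}\rceil\}$ ensures $\sup_{z\in[-1,1]}|f_s(z)-g(z)|\le\varepsilon$, so $M=O(s/\sqrt\varepsilon)$ ReLU units suffice for accuracy $\varepsilon$.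
   Context: $\mathrm{ReLU}(t)=\max\{0,t\}$. *)

theory Defs
  imports Complex_Main
begin

definition relu :: "real \<Rightarrow> real" where
  "relu t = max 0 t"

definition knot :: "nat \<Rightarrow> nat \<Rightarrow> real" where
  "knot N k = -1 + 2 * real k / real N"

text \<open>The continuous piecewise-linear interpolant of f at the knots z_0,...,z_N:
  on [z_k, z_(k+1)] (k = 0..N-1) it is the linear function through
  (z_k, f z_k) and (z_(k+1), f z_(k+1)).\<close>
definition pl_interp :: "(real \<Rightarrow> real) \<Rightarrow> nat \<Rightarrow> real \<Rightarrow> real" where
  "pl_interp f N z =
     (let k = min (N - 1) (nat \<lfloor>(z + 1) * real N / 2\<rfloor>)
      in f (knot N k) + (f (knot N (Suc k)) - f (knot N k)) * (z - knot N k) * real N / 2)"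

end

theory Submission
  imports Defs
begin

lemma pow_nm1: "real n * x ^ (n - 1) * x = real n * (x::real) ^ n"
  by (cases n) auto

lemma E_bound:
  fixes x y :: real
  assumes "\<bar>x\<bar> \<le> 1" "\<bar>y\<bar> \<le> 1"
  shows "\<bar>y ^ s - x ^ s - real s * x ^ (s - 1) * (y - x)\<bar> \<le> real s * (real s - 1) / 2 * (y - x)^2"
proof (induction s)
  case 0
  then show ?case by simp
next
  case (Suc n)
  have id: "y ^ Suc n - x ^ Suc n - real (Suc n) * x ^ (Suc n - 1) * (y - x)
     = y * (y ^ n - x ^ n - real n * x ^ (n - 1) * (y - x)) + real n * x ^ (n - 1) * (y - x)^2"
  proof -
    have "real n * x ^ (n - 1) * (y - x)^2 = real n * x ^ (n - 1) * y * (y - x) - real n * x ^ (n - 1) * x * (y - x)"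
      by (simp add: power2_eq_square algebra_simps)
    also have "\<dots> = real n * x ^ (n - 1) * y * (y - x) - real n * x ^ n * (y - x)"
      using pow_nm1[of n x] by simp
    finally show ?thesis by (simp add: algebra_simps)
  qed
  have a: "\<bar>y * (y ^ n - x ^ n - real n * x ^ (n - 1) * (y - x))\<bar> \<le> real n * (real n - 1) / 2 * (y - x)^2"
  proof -
    have "\<bar>y * (y ^ n - x ^ n - real n * x ^ (n - 1) * (y - x))\<bar> \<le> 1 * \<bar>y ^ n - x ^ n - real n * x ^ (n - 1) * (y - x)\<bar>"
      unfolding abs_mult by (rule mult_right_mono) (use assms in auto)
    then show ?thesis using Suc.IH by simp
  qed
  have xp: "\<bar>x ^ (n - 1)\<bar> \<le> 1" using assms by (simp add: power_abs power_le_one)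
  have b: "\<bar>real n * x ^ (n - 1) * (y - x)^2\<bar> \<le> real n * (y - x)^2"
  proof -
    have "\<bar>real n * x ^ (n - 1) * (y - x)^2\<bar> = real n * (y - x)^2 * \<bar>x ^ (n - 1)\<bar>"
      by (simp add: abs_mult)
    also have "\<dots> \<le> real n * (y - x)^2 * 1"
      by (rule mult_left_mono) (use xp in auto)
    finally show ?thesis by simp
  qed
  have "\<bar>y ^ Suc n - x ^ Suc n - real (Suc n) * x ^ (Suc n - 1) * (y - x)\<bar>
     \<le> real n * (real n - 1) / 2 * (y - x)^2 + real n * (y - x)^2"
    unfolding id using a b by linarith
  also have "\<dots> = real (Suc n) * (real (Suc n) - 1) / 2 * (y - x)^2"
    by (simp add: field_simps)
  finally show ?case .
qed

lemma slope_bound: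
  fixes x y :: real
  assumes "\<bar>x\<bar> \<le> 1" "\<bar>y\<bar> \<le> 1"
  shows "\<bar>y ^ s - x ^ s\<bar> \<le> real s * \<bar>y - x\<bar>"
proof (induction s)
  case 0
  then show ?case by simp
next
  case (Suc n)
  have id: "y ^ Suc n - x ^ Suc n = y * (y ^ n - x ^ n) + x ^ n * (y - x)"
    by (simp add: algebra_simps)
  have a: "\<bar>y * (y ^ n - x ^ n)\<bar> \<le> real n * \<bar>y - x\<bar>"
  proof -
    have "\<bar>y * (y ^ n - x ^ n)\<bar> \<le> 1 * \<bar>y ^ n - x ^ n\<bar>"
      unfolding abs_mult by (rule mult_right_mono) (use assms in auto)
    then show ?thesis using Suc.IH by simp
  qed
  have xp: "\<bar>x ^ n\<bar> \<le> 1" using assms by (simp add: power_abs power_le_one)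
  have b: "\<bar>x ^ n * (y - x)\<bar> \<le> \<bar>y - x\<bar>"
    unfolding abs_mult using mult_right_mono[OF xp, of "\<bar>y - x\<bar>"] by simp
  have "\<bar>y ^ Suc n - x ^ Suc n\<bar> \<le> real n * \<bar>y - x\<bar> + \<bar>y - x\<bar>"
    unfolding id using a b by linarith
  then show ?case by (simp add: algebra_simps)
qed

lemma combine_bound:
  fixes R0 R1 u v K :: real
  assumes "\<bar>R0\<bar> \<le> K * u^2" "\<bar>R1\<bar> \<le> K * v^2" "u \<ge> 0" "v \<ge> 0" "u + v > 0" "K \<ge> 0"
  shows "\<bar>R0 * v / (u + v) + R1 * u / (u + v)\<bar> \<le> K * (u + v)^2 / 4"
proof -
  have "\<bar>R0 * v + R1 * u\<bar> \<le> \<bar>R0\<bar> * v + \<bar>R1\<bar> * u"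
    using assms abs_triangle_ineq[of "R0 * v" "R1 * u"] by (simp add: abs_mult)
  also have "\<dots> \<le> K * u^2 * v + K * v^2 * u"
    using assms by (intro add_mono mult_right_mono) auto
  also have "\<dots> = K * u * v * (u + v)" by (simp add: power2_eq_square algebra_simps)
  also have "\<dots> \<le> K * (u + v)^2 / 4 * (u + v)"
  proof -
    have "u * v \<le> (u + v)^2 / 4" using sum_squares_ge_zero[of "u - v" 0]
      by (simp add: power2_eq_square algebra_simps)
    then have "K * (u * v) \<le> K * ((u + v)^2 / 4)" using assms by (intro mult_left_mono) auto
    then show ?thesis using assms by (intro mult_right_mono) (auto simp: algebra_simps)
  qed
  finally have "\<bar>R0 * v + R1 * u\<bar> / (u + v) \<le> K * (u + v)^2 / 4"
    using assms by (simp add: divide_simps)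
  moreover have "R0 * v / (u + v) + R1 * u / (u + v) = (R0 * v + R1 * u) / (u + v)"
    by (simp add: add_divide_distrib)
  ultimately show ?thesis using assms by simp
qed

lemma knot_diff: "N \<ge> 1 \<Longrightarrow> knot N (Suc k) - knot N k = 2 / real N"
  unfolding knot_def by (simp add: field_simps)

lemma knot_abs: "N \<ge> 1 \<Longrightarrow> k \<le> N \<Longrightarrow> \<bar>knot N k\<bar> \<le> 1"
  unfolding knot_def by (auto simp: field_simps)

lemma knot_idx:
  fixes z :: real
  assumes "N \<ge> 1" "-1 \<le> z" "z \<le> 1"
  defines "k \<equiv> min (N - 1) (nat \<lfloor>(z + 1) * real N / 2\<rfloor>)"
  shows "k \<le> N - 1 \<and> knot N k \<le> z \<and> z \<le> knot N (Suc k)"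
proof -
  define t where "t = (z + 1) * real N / 2"
  have t0: "t \<ge> 0" using assms unfolding t_def by auto
  have tN: "t \<le> real N" using assms unfolding t_def by (auto simp: field_simps)
  define m where "m = nat \<lfloor>t\<rfloor>"
  have m1: "real m \<le> t" using t0 unfolding m_def by linarith
  have m2: "t < real m + 1" using t0 unfolding m_def by linarith
  have kn: "k = min (N - 1) m" unfolding k_def m_def t_def by simp
  have Np: "real N > 0" using assms by simp
  have kz: "knot N j \<le> z \<longleftrightarrow> real j \<le> t" for j
    unfolding knot_def t_def using Np by (simp add: field_simps)
  have zk: "z \<le> knot N j \<longleftrightarrow> t \<le> real j" for j
    unfolding knot_def t_def using Np by (simp add: field_simps)
  show ?thesis
  proof (cases "m \<le> N - 1")
    case True
    then have "k = m" using kn by simp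
    then show ?thesis using True kz zk m1 m2 by simp
  next
    case False
    then have "k = N - 1" using kn by simp
    moreover have "real (N - 1) \<le> t" using False m1 by linarith
    moreover have "real (Suc (N - 1)) = real N" using assms by simp
    ultimately show ?thesis using kz zk tN by simp
  qed
qed

lemma telescope:
  fixes f :: "real \<Rightarrow> real" and z :: real
  assumes "N \<ge> 1"
  defines "sl \<equiv> \<lambda>j. (f (knot N (Suc j)) - f (knot N j)) * real N / 2"
  shows "f (knot N k) + sl k * (z - knot N k) =
     f (knot N 0) + sl 0 * (z - knot N 0) + (\<Sum>j=1..k. (sl j - sl (j - 1)) * (z - knot N j))"
proof (induction k)
  case 0
  then show ?case by simp
next
  case (Suc k)
  have e: "sl k * (knot N (Suc k) - knot N k) = f (knot N (Suc k)) - f (knot N k)"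
    unfolding sl_def knot_diff[OF assms(1)] using assms by (simp add: field_simps)
  have "f (knot N 0) + sl 0 * (z - knot N 0) + (\<Sum>j=1..Suc k. (sl j - sl (j - 1)) * (z - knot N j))
      = f (knot N k) + sl k * (z - knot N k) + (sl (Suc k) - sl k) * (z - knot N (Suc k))"
    using Suc.IH by simp
  also have "\<dots> = f (knot N k) + sl k * (knot N (Suc k) - knot N k) + sl (Suc k) * (z - knot N (Suc k))"
    by (simp add: algebra_simps)
  also have "\<dots> = f (knot N (Suc k)) + sl (Suc k) * (z - knot N (Suc k))"
    using e by simp
  finally show ?case by simp
qed

lemma part1:
  fixes z :: real
  assumes N: "N \<ge> 1" and z: "-1 \<le> z" "z \<le> 1"
  shows "\<bar>z ^ s - pl_interp (\<lambda>z. z ^ s) N z\<bar> \<le> real s * (real s - 1) / (2 * real N ^ 2)"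
proof -
  define k where "k = min (N - 1) (nat \<lfloor>(z + 1) * real N / 2\<rfloor>)"
  have kk: "k \<le> N - 1 \<and> knot N k \<le> z \<and> z \<le> knot N (Suc k)"
    using knot_idx[OF N z] unfolding k_def by simp
  define x0 where "x0 = knot N k"
  define x1 where "x1 = knot N (Suc k)"
  define u where "u = z - x0"
  define v where "v = x1 - z"
  define h where "h = 2 / real N"
  define K where "K = real s * (real s - 1) / 2"
  define D where "D = real s * z ^ (s - 1)"
  define R0 where "R0 = x0 ^ s - z ^ s - D * (x0 - z)"
  define R1 where "R1 = x1 ^ s - z ^ s - D * (x1 - z)"
  have Np: "real N > 0" using N by simp
  have hp: "h > 0" unfolding h_def using Np by simp
  have uv: "u + v = h" unfolding u_def v_def x0_def x1_def h_def using knot_diff[OF N, of k] by simp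
  have u0: "u \<ge> 0" and v0: "v \<ge> 0" using kk unfolding u_def v_def x0_def x1_def by auto
  have ax0: "\<bar>x0\<bar> \<le> 1" unfolding x0_def using knot_abs[OF N, of k] kk by linarith
  have ax1: "\<bar>x1\<bar> \<le> 1" unfolding x1_def proof -
    have "Suc k \<le> N" using kk N by linarith
    then show "\<bar>knot N (Suc k)\<bar> \<le> 1" using knot_abs[OF N] by blast
  qed
  have az: "\<bar>z\<bar> \<le> 1" using z by simp
  have b0: "\<bar>R0\<bar> \<le> K * u^2"
    using E_bound[OF az ax0, of s] unfolding R0_def K_def D_def u_def
    by (simp add: power2_commute)
  have b1: "\<bar>R1\<bar> \<le> K * v^2"
    using E_bound[OF az ax1, of s] unfolding R1_def K_def D_def v_def by simp
  have K0: "K \<ge> 0" unfolding K_def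
  proof -
    show "0 \<le> real s * (real s - 1) / 2"
      by (cases s) auto
  qed
  have g: "pl_interp (\<lambda>z. z ^ s) N z = x0 ^ s + (x1 ^ s - x0 ^ s) * u / h"
    unfolding pl_interp_def Let_def k_def[symmetric] x0_def[symmetric] x1_def[symmetric]
      u_def h_def using Np by (simp add: field_simps)
  have "pl_interp (\<lambda>z. z ^ s) N z - z ^ s = R0 * v / (u + v) + R1 * u / (u + v)"
  proof -
    have x0e: "x0 ^ s = z ^ s - D * u + R0" unfolding R0_def u_def by (simp add: algebra_simps)
    have x1e: "x1 ^ s = z ^ s + D * v + R1" unfolding R1_def v_def by simp
    have d: "x1 ^ s - x0 ^ s = D * h + (R1 - R0)" unfolding x0e x1e uv[symmetric]
      by (simp add: algebra_simps)
    have "(D * h + (R1 - R0)) * u / h = D * u + (R1 - R0) * u / h"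
      using hp by (simp add: field_simps)
    moreover have "R0 + (R1 - R0) * u / h = R0 * v / h + R1 * u / h"
    proof -
      have vv: "v = h - u" using uv by simp
      have "R0 * (h - u) / h = R0 - R0 * u / h" using hp by (simp add: field_simps)
      then show ?thesis unfolding vv by (simp add: diff_divide_distrib algebra_simps)
    qed
    ultimately show ?thesis unfolding g d uv[symmetric] using x0e
      by (simp add: algebra_simps)
  qed
  then have "\<bar>z ^ s - pl_interp (\<lambda>z. z ^ s) N z\<bar> \<le> K * (u + v)^2 / 4"
    using combine_bound[OF b0 b1 u0 v0 _ K0] uv hp by (metis abs_minus_commute)
  also have "\<dots> = real s * (real s - 1) / (2 * real N ^ 2)"
    unfolding uv h_def K_def using Np by (simp add: field_simps power2_eq_square)
  finally show ?thesis .
qed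

lemma second_diff:
  fixes s :: nat
  assumes N: "N \<ge> 1" and i: "1 \<le> i" "i \<le> N - 1"
  defines "sl \<equiv> \<lambda>j. ((knot N (Suc j)) ^ s - (knot N j) ^ s) * real N / 2"
  shows "\<bar>sl i - sl (i - 1)\<bar> \<le> 2 * real s * (real s - 1) / real N"
proof -
  define x where "x = knot N i"
  define xp where "xp = knot N (Suc i)"
  define xm where "xm = knot N (i - 1)"
  define h where "h = 2 / real N"
  define K where "K = real s * (real s - 1) / 2"
  define D where "D = real s * x ^ (s - 1)"
  have Np: "real N > 0" using N by simp
  have hp: "h > 0" unfolding h_def using Np by simp
  have e1: "xp - x = h" unfolding xp_def x_def h_def using knot_diff[OF N] by simp
  have e2: "x - xm = h" unfolding xm_def x_def h_def using knot_diff[OF N, of "i - 1"] i by simp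
  have ax: "\<bar>x\<bar> \<le> 1" unfolding x_def using knot_abs[OF N, of i] i by linarith
  have axp: "\<bar>xp\<bar> \<le> 1" unfolding xp_def using knot_abs[OF N, of "Suc i"] i N by linarith
  have axm: "\<bar>xm\<bar> \<le> 1" unfolding xm_def using knot_abs[OF N, of "i - 1"] i by linarith
  define R1 where "R1 = xp ^ s - x ^ s - D * (xp - x)"
  define R0 where "R0 = xm ^ s - x ^ s - D * (xm - x)"
  have b1: "\<bar>R1\<bar> \<le> K * h^2"
    using E_bound[OF ax axp, of s] unfolding R1_def K_def D_def e1 by simp
  have b0: "\<bar>R0\<bar> \<le> K * h^2"
  proof -
    have "(xm - x)^2 = h^2" using e2 by (simp add: power2_commute)
    then show ?thesis using E_bound[OF ax axm, of s] unfolding R0_def K_def D_def by simp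
  qed
  have sli: "sl i = (xp ^ s - x ^ s) / h" unfolding sl_def xp_def x_def h_def by simp
  have slm: "sl (i - 1) = (x ^ s - xm ^ s) / h"
  proof -
    have "Suc (i - 1) = i" using i by simp
    then show ?thesis unfolding sl_def xm_def x_def h_def by simp
  qed
  have "sl i - sl (i - 1) = (R1 + R0) / h"
  proof -
    have "xp ^ s - x ^ s - (x ^ s - xm ^ s) = R1 + R0"
      unfolding R1_def R0_def using e1 e2 by (simp add: algebra_simps)
    then show ?thesis unfolding sli slm by (simp add: diff_divide_distrib[symmetric])
  qed
  then have "\<bar>sl i - sl (i - 1)\<bar> = \<bar>R1 + R0\<bar> / h" using hp by simp
  also have "\<dots> \<le> (2 * K * h^2) / h"
    using b0 b1 hp by (intro divide_right_mono) auto
  also have "\<dots> = 2 * real s * (real s - 1) / real N"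
    unfolding K_def h_def using Np by (simp add: field_simps power2_eq_square)
  finally show ?thesis .
qed

lemma part2:
  fixes s N :: nat
  assumes S: "s \<ge> 1" and N: "N \<ge> 1"
  shows "\<exists>M a b c. M \<le> N + 1 \<and>
          (\<forall>i\<in>{1..M}. \<bar>a i\<bar> \<le> 1 \<and> \<bar>b i\<bar> \<le> 1 \<and>
              \<bar>c i\<bar> \<le> max (real s + 1/2) (2 * real s * (real s - 1) / real N)) \<and>
          (\<forall>z\<in>{-1..1}. pl_interp (\<lambda>z. z ^ s) N z = (\<Sum>i=1..M. c i * relu (a i * z - b i)))"
proof -
  define f :: "real \<Rightarrow> real" where "f = (\<lambda>z. z ^ s)"
  define sl where "sl = (\<lambda>j. (f (knot N (Suc j)) - f (knot N j)) * real N / 2)"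
  define a :: "nat \<Rightarrow> real" where "a = (\<lambda>i. if i = N then 0 else 1)"
  define b where "b = (\<lambda>i. if i < N then knot N i else -1)"
  define c where "c = (\<lambda>i. if i < N then sl i - sl (i - 1) else if i = N then f (knot N 0) else sl 0)"
  define B where "B = max (real s + 1/2) (2 * real s * (real s - 1) / real N)"
  have Np: "real N > 0" using N by simp
  have k0: "knot N 0 = -1" unfolding knot_def by simp
  have k1: "knot N 1 = -1 + 2 / real N" unfolding knot_def by simp
  have bounds: "\<bar>a i\<bar> \<le> 1 \<and> \<bar>b i\<bar> \<le> 1 \<and> \<bar>c i\<bar> \<le> B" if "i \<in> {1..N+1}" for i
  proof -
    have "\<bar>a i\<bar> \<le> 1" unfolding a_def by simp
    moreover have "\<bar>b i\<bar> \<le> 1" unfolding b_def using knot_abs[OF N, of i] by auto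
    moreover have "\<bar>c i\<bar> \<le> B"
    proof (cases "i < N")
      case True
      then have "\<bar>c i\<bar> \<le> 2 * real s * (real s - 1) / real N"
        unfolding c_def sl_def f_def using second_diff[OF N, of i s] that by simp
      then show ?thesis unfolding B_def by linarith
    next
      case False
      show ?thesis
      proof (cases "i = N")
        case True
        then have "\<bar>c i\<bar> = 1" using False unfolding c_def f_def k0 by (simp add: power_abs)
        then show ?thesis unfolding B_def using S by simp
      next
        case F2: False
        have a0: "\<bar>knot N 0\<bar> \<le> 1" "\<bar>knot N 1\<bar> \<le> 1" using knot_abs[OF N] N by auto
        have "\<bar>f (knot N 1) - f (knot N 0)\<bar> \<le> real s * \<bar>knot N 1 - knot N 0\<bar>"
          unfolding f_def by (rule slope_bound[OF a0(1) a0(2)])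
        also have "\<bar>knot N 1 - knot N 0\<bar> = 2 / real N" unfolding k0 k1 using Np by simp
        finally have fb: "\<bar>f (knot N 1) - f (knot N 0)\<bar> \<le> real s * (2 / real N)" .
        have "\<bar>sl 0\<bar> = \<bar>f (knot N 1) - f (knot N 0)\<bar> * (real N / 2)"
          unfolding sl_def using Np by (simp add: abs_mult)
        also have "\<dots> \<le> real s * (2 / real N) * (real N / 2)"
          using fb Np by (intro mult_right_mono) auto
        also have "\<dots> = real s" using Np by simp
        finally have "\<bar>sl 0\<bar> \<le> real s" .
        then have "\<bar>c i\<bar> \<le> real s" using False F2 unfolding c_def by simp
        then show ?thesis unfolding B_def by linarith
      qed
    qed
    ultimately show ?thesis by blast
  qed
  have repr: "pl_interp f N z = (\<Sum>i=1..N+1. c i * relu (a i * z - b i))" if z: "z \<in> {-1..1}" for z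
  proof -
    define k where "k = min (N - 1) (nat \<lfloor>(z + 1) * real N / 2\<rfloor>)"
    have kk: "k \<le> N - 1 \<and> knot N k \<le> z \<and> z \<le> knot N (Suc k)"
      using knot_idx[OF N, of z] z unfolding k_def by simp
    have g: "pl_interp f N z = f (knot N k) + sl k * (z - knot N k)"
      unfolding pl_interp_def Let_def k_def[symmetric] sl_def by (simp add: algebra_simps)
    have s1: "(\<Sum>i=1..N+1. c i * relu (a i * z - b i))
        = (\<Sum>i=1..N-1. c i * relu (a i * z - b i)) + c N * relu (a N * z - b N)
          + c (Suc N) * relu (a (Suc N) * z - b (Suc N))"
    proof -
      have NN: "N = Suc (N - 1)" using N by simp
      have "(\<Sum>i=1..Suc N. c i * relu (a i * z - b i)) = (\<Sum>i=1..N. c i * relu (a i * z - b i))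
          + c (Suc N) * relu (a (Suc N) * z - b (Suc N))" by (simp add: sum.cl_ivl_Suc)
      moreover have "(\<Sum>i=1..N. c i * relu (a i * z - b i)) = (\<Sum>i=1..N-1. c i * relu (a i * z - b i))
          + c N * relu (a N * z - b N)"
        by (subst NN, subst sum.cl_ivl_Suc) (use N in auto)
      ultimately show ?thesis by simp
    qed
    have cN: "c N * relu (a N * z - b N) = f (knot N 0)" unfolding c_def a_def b_def relu_def by simp
    have cS: "c (Suc N) * relu (a (Suc N) * z - b (Suc N)) = sl 0 * (z - knot N 0)"
      unfolding c_def a_def b_def relu_def k0 using z by simp
    have rl: "c i * relu (a i * z - b i) = (if i \<le> k then (sl i - sl (i - 1)) * (z - knot N i) else 0)"
      if i: "i \<in> {1..N-1}" for i
    proof -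
      have iN: "i < N" "i \<noteq> N" using i N by auto
      have ci: "c i * relu (a i * z - b i) = (sl i - sl (i - 1)) * max 0 (z - knot N i)"
        unfolding c_def a_def b_def relu_def using iN by simp
      show ?thesis
      proof (cases "i \<le> k")
        case True
        have "knot N i \<le> knot N k" unfolding knot_def using True Np by (simp add: divide_right_mono)
        then show ?thesis unfolding ci using True kk by simp
      next
        case False
        have "knot N (Suc k) \<le> knot N i" unfolding knot_def using False Np by (simp add: divide_right_mono)
        then show ?thesis unfolding ci using False kk by simp
      qed
    qed
    have "(\<Sum>i=1..N-1. c i * relu (a i * z - b i))
        = (\<Sum>i=1..N-1. (if i \<le> k then (sl i - sl (i - 1)) * (z - knot N i) else 0))"
      using rl by (rule sum.cong[OF refl])
    also have "\<dots> = (\<Sum>i\<in>{i\<in>{1..N-1}. i \<le> k}. (sl i - sl (i - 1)) * (z - knot N i))"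
      by (rule sum.inter_filter[symmetric]) simp
    also have "{i\<in>{1..N-1}. i \<le> k} = {1..k}" using kk by auto
    finally have "(\<Sum>i=1..N-1. c i * relu (a i * z - b i)) = (\<Sum>j=1..k. (sl j - sl (j - 1)) * (z - knot N j))" .
    then show ?thesis unfolding s1 cN cS g sl_def using telescope[OF N, of f k z] by simp
  qed
  show ?thesis
    apply (rule exI[of _ "N + 1"], rule exI[of _ a], rule exI[of _ b], rule exI[of _ c])
    using bounds repr unfolding B_def f_def by auto
qed

lemma part3:
  fixes s N :: nat and e :: real
  assumes N: "N \<ge> 1" and e: "e > 0"
    and h: "real N \<ge> max 1 (real_of_int \<lceil>sqrt (real s * (real s - 1) / (2 * e))\<rceil>)"
  shows "real s * (real s - 1) / (2 * real N ^ 2) \<le> e"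
proof -
  define Q where "Q = real s * (real s - 1)"
  have Q0: "Q \<ge> 0" unfolding Q_def by (cases s) auto
  have Np: "real N > 0" using N by simp
  have "sqrt (Q / (2 * e)) \<le> real N" using h unfolding Q_def
    by (meson le_of_int_ceiling max.bounded_iff order_trans)
  then have "(sqrt (Q / (2 * e)))^2 \<le> (real N)^2"
    using Q0 e by (intro power_mono) auto
  moreover have "(sqrt (Q / (2 * e)))^2 = Q / (2 * e)" using Q0 e by (intro real_sqrt_pow2) simp
  ultimately have "Q / (2 * e) \<le> (real N)^2" by simp
  then have "Q \<le> (real N)^2 * (2 * e)" using e by (simp add: divide_le_eq)
  then show ?thesis unfolding Q_def[symmetric] using Np e by (simp add: divide_le_eq algebra_simps)
qed

theorem mainTheorem17:
  fixes s N :: nat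
  assumes "s \<ge> 1" and "N \<ge> 1"
  defines "g \<equiv> pl_interp (\<lambda>z. z ^ s) N"
  shows "(\<forall>z\<in>{-1..1}. \<bar>z ^ s - g z\<bar> \<le> real s * (real s - 1) / (2 * real N ^ 2))
    \<and> (\<exists>M a b c. M \<le> N + 1 \<and>
          (\<forall>i\<in>{1..M}. \<bar>a i\<bar> \<le> 1 \<and> \<bar>b i\<bar> \<le> 1 \<and>
              \<bar>c i\<bar> \<le> max (real s + 1/2) (2 * real s * (real s - 1) / real N)) \<and>
          (\<forall>z\<in>{-1..1}. g z = (\<Sum>i=1..M. c i * relu (a i * z - b i))))
    \<and> (\<forall>\<epsilon>>0. real N \<ge> max 1 (real_of_int \<lceil>sqrt (real s * (real s - 1) / (2 * \<epsilon>))\<rceil>)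
          \<longrightarrow> (\<forall>z\<in>{-1..1}. \<bar>z ^ s - g z\<bar> \<le> \<epsilon>))"
proof (intro conjI)
  show P1: "\<forall>z\<in>{-1..1}. \<bar>z ^ s - g z\<bar> \<le> real s * (real s - 1) / (2 * real N ^ 2)"
    unfolding g_def using part1[OF assms(2)] by auto
  show "\<exists>M a b c. M \<le> N + 1 \<and>
          (\<forall>i\<in>{1..M}. \<bar>a i\<bar> \<le> 1 \<and> \<bar>b i\<bar> \<le> 1 \<and>
              \<bar>c i\<bar> \<le> max (real s + 1/2) (2 * real s * (real s - 1) / real N)) \<and>
          (\<forall>z\<in>{-1..1}. g z = (\<Sum>i=1..M. c i * relu (a i * z - b i)))"
    unfolding g_def by (rule part2[OF assms(1,2)])
  show "\<forall>\<epsilon>>0. real N \<ge> max 1 (real_of_int \<lceil>sqrt (real s * (real s - 1) / (2 * \<epsilon>))\<rceil>)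
          \<longrightarrow> (\<forall>z\<in>{-1..1}. \<bar>z ^ s - g z\<bar> \<le> \<epsilon>)"
    using P1 part3[OF assms(2)] by (meson order_trans)
qed

end
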